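(* Let $G=(V,E)$ be a simple undirected graph, let $E^2=\{\{u,v\}\in\binom{V}{2}:\operatorname{dist}_G(u,v)\le 2\}$, and let $(\hat x,\hat y)$ with $\hat x\in\mathbb{Z}_+^{E^2}$ and $\hat y\in\{0,1\}^V$ be an integer point satisfying $$\frac{\sum_{i\in N_G(u)\cap N_G(v)}(1-\hat y_i)}{|N_G(u)\cap N_G(v)|}-\hat y_u-\hat y_v\le \hat x_{uv}\quad\text{for all }\{u,v\}\in E^2\setminus E.$$ Then $1-\hat y_u-\hat y_v-\hat y_i\le \hat x_{uv}$ for all $\{u,v\}\in E^2\setminus E$ and all $i\in N_G(u)\cap N_G(v)$.
   Context: $N_G(v)$ denotes the set of neighbors of $v$ in $G$ and $\operatorname{dist}_G$ the hop distance in $G$. For $\{u,v\}\in E^2\setminus E$ the vertices are at distance exactly $2$, so $N_G(u)\cap N_G(v)\neq\emptyset$. *)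

theory Defs
  imports Complex_Main
begin

definition simple_graph :: "'a set \<Rightarrow> ('a \<Rightarrow> 'a \<Rightarrow> bool) \<Rightarrow> bool" where
  "simple_graph V E \<longleftrightarrow> finite V \<and> (\<forall>u v. E u v \<longrightarrow> u \<in> V \<and> v \<in> V)
     \<and> (\<forall>u v. E u v \<longrightarrow> E v u) \<and> (\<forall>v. \<not> E v v)"

definition nbrs :: "'a set \<Rightarrow> ('a \<Rightarrow> 'a \<Rightarrow> bool) \<Rightarrow> 'a \<Rightarrow> 'a set" where
  "nbrs V E v = {w \<in> V. E v w}"

definition in_E2 :: "'a set \<Rightarrow> ('a \<Rightarrow> 'a \<Rightarrow> bool) \<Rightarrow> 'a \<Rightarrow> 'a \<Rightarrow> bool" where
  "in_E2 V E u v \<longleftrightarrow> u \<in> V \<and> v \<in> V \<and> u \<noteq> v \<and> (E u v \<or> (\<exists>w\<in>V. E u w \<and> E w v))"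

end

theory Submission
  imports Defs
begin

theorem lemma2:
  fixes V :: "'a set" and E :: "'a \<Rightarrow> 'a \<Rightarrow> bool"
    and x :: "'a \<Rightarrow> 'a \<Rightarrow> int" and y :: "'a \<Rightarrow> int"
  assumes G: "simple_graph V E"
    and x_sym: "\<And>u v. in_E2 V E u v \<Longrightarrow> x u v = x v u"
    and x_nonneg: "\<And>u v. in_E2 V E u v \<Longrightarrow> x u v \<ge> 0"
    and y_bin: "\<And>v. v \<in> V \<Longrightarrow> y v \<in> {0, 1}"
    and ineq: "\<And>u v. in_E2 V E u v \<Longrightarrow> \<not> E u v \<Longrightarrow>
       (\<Sum>i\<in>nbrs V E u \<inter> nbrs V E v. real_of_int (1 - y i)) / real (card (nbrs V E u \<inter> nbrs V E v))
         - real_of_int (y u) - real_of_int (y v) \<le> real_of_int (x u v)"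
  shows "\<forall>u v i. in_E2 V E u v \<and> \<not> E u v \<and> i \<in> nbrs V E u \<inter> nbrs V E v \<longrightarrow>
           1 - y u - y v - y i \<le> x u v"
proof (intro allI impI)
  fix u v i assume h: "in_E2 V E u v \<and> \<not> E u v \<and> i \<in> nbrs V E u \<inter> nbrs V E v"
  let ?N = "nbrs V E u \<inter> nbrs V E v"
  have uv: "u \<in> V" "v \<in> V" using h by (auto simp: in_E2_def)
  have iV: "i \<in> V" using h by (auto simp: nbrs_def)
  have x0: "x u v \<ge> 0" using x_nonneg h by blast
  have fin: "finite ?N" using G by (auto simp: simple_graph_def nbrs_def)
  show "1 - y u - y v - y i \<le> x u v"
  proof (cases "y u = 0 \<and> y v = 0 \<and> y i = 0")
    case False
    then show ?thesis using y_bin[OF uv(1)] y_bin[OF uv(2)] y_bin[OF iV] x0 by auto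
  next
    case True
    have terms: "\<And>j. j \<in> ?N \<Longrightarrow> real_of_int (1 - y j) \<ge> 0"
      using y_bin by (force simp: nbrs_def)
    have "(\<Sum>j\<in>?N. real_of_int (1 - y j)) \<ge> real_of_int (1 - y i)"
      using h fin terms by (intro member_le_sum) auto
    hence S: "(\<Sum>j\<in>?N. real_of_int (1 - y j)) > 0" using True by simp
    have c: "real (card ?N) > 0" using fin h by (auto simp: card_gt_0_iff)
    have "(\<Sum>j\<in>?N. real_of_int (1 - y j)) / real (card ?N) > 0" using S c by simp
    hence "real_of_int (x u v) > 0" using ineq[of u v] h True by force
    hence "x u v \<ge> 1" by simp
    then show ?thesis using True by simp
  qed
qed

end
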